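(* For every $\epsilon>0$ there exist infinitely many graphs $G$ such that $G$ is $\Gamma$-connected for some Abelian group $\Gamma$ of prime order but $G$ is not $\Gamma'$-connected for some Abelian group $\Gamma'$ with $|\Gamma'| \geq (2-\epsilon)|\Gamma|$. Consequently, for every $\epsilon>0$ there are infinitely many primes $k$ with $g(k) > (2-\epsilon)k$.
   Context: Graphs are finite, may have multiple edges but no loops. For an orientation $D$ of $G$ and a vertex $v$, $E^+(v)$ (resp. $E^-(v)$) is the set of edges directed out of (resp. into) $v$. For an Abelian group $\Gamma$, a graph $G$ is $\Gamma$-connected if for some (equivalently, any) orientation $D$ of $G$ and every $\beta: V(G)\to\Gamma$ with $\sum_{v}\beta(v)=0$ there is $f: E(G)\to\Gamma$ with $f(e)\neq 0$ for all $e$ and $\sum_{e\in E^+(v)} f(e)-\sum_{e\in E^-(v)} f(e)=\beta(v)$ for all $v$. For a natural number $k$, $g(k)$ is the least number such that whenever a graph $G$ is $\Gamma$-connected for some Abelian group $\Gamma$ of order $k$, $G$ is also $\Gamma'$-connected for every Abelian group $\Gamma'$ of order $|\Gamma'|\geq g(k)$. *)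

theory Defs
  imports "HOL-Algebra.Algebra" "HOL-Computational_Algebra.Primes" "HOL-Library.Extended_Nat"
begin

text \<open>A finite loopless multigraph: vertex set V, edge set E, and each edge e has
  two distinct end vertices, recorded (in an arbitrary reference order) as ends e.\<close>
definition multigraph :: "'v set \<Rightarrow> 'e set \<Rightarrow> ('e \<Rightarrow> 'v \<times> 'v) \<Rightarrow> bool" where
  "multigraph V E ends \<longleftrightarrow> finite V \<and> finite E \<and>
     (\<forall>e\<in>E. fst (ends e) \<in> V \<and> snd (ends e) \<in> V \<and> fst (ends e) \<noteq> snd (ends e))"

text \<open>Group connectivity (the group written multiplicatively as in HOL-Algebra).\<close>
definition group_connected ::
  "('a, 'm) monoid_scheme \<Rightarrow> 'v set \<Rightarrow> 'e set \<Rightarrow> ('e \<Rightarrow> 'v \<times> 'v) \<Rightarrow> bool" where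
  "group_connected \<Gamma> V E ends \<longleftrightarrow>
     (\<exists>D. (\<forall>e\<in>E. D e = ends e \<or> D e = prod.swap (ends e)) \<and>
       (\<forall>\<beta> \<in> V \<rightarrow> carrier \<Gamma>. finprod \<Gamma> \<beta> V = \<one>\<^bsub>\<Gamma>\<^esub> \<longrightarrow>
          (\<exists>f \<in> E \<rightarrow> carrier \<Gamma>. (\<forall>e\<in>E. f e \<noteq> \<one>\<^bsub>\<Gamma>\<^esub>) \<and>
             (\<forall>v\<in>V. finprod \<Gamma> f {e\<in>E. fst (D e) = v} \<otimes>\<^bsub>\<Gamma>\<^esub>
                     inv\<^bsub>\<Gamma>\<^esub> (finprod \<Gamma> f {e\<in>E. snd (D e) = v}) = \<beta> v))))"

text \<open>Finite abelian group of order k (carriers taken in nat; every finite group has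
  an isomorphic copy there).\<close>
definition fin_abgroup :: "nat monoid \<Rightarrow> bool" where
  "fin_abgroup \<Gamma> \<longleftrightarrow> comm_group \<Gamma> \<and> finite (carrier \<Gamma>)"

definition g_prop :: "nat \<Rightarrow> nat \<Rightarrow> bool" where
  "g_prop k m \<longleftrightarrow> (\<forall>(V::nat set) (E::nat set) ends. multigraph V E ends \<longrightarrow>
      (\<exists>\<Gamma>. fin_abgroup \<Gamma> \<and> card (carrier \<Gamma>) = k \<and> group_connected \<Gamma> V E ends) \<longrightarrow>
      (\<forall>\<Gamma>'. fin_abgroup \<Gamma>' \<and> card (carrier \<Gamma>') \<ge> m \<longrightarrow> group_connected \<Gamma>' V E ends))"

definition g :: "nat \<Rightarrow> enat" where
  "g k = (if \<exists>m. g_prop k m then enat (LEAST m. g_prop k m) else \<infinity>)"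

end

theory Submission
  imports Defs "HOL-Number_Theory.Number_Theory"
begin

definition Zm :: "nat \<Rightarrow> nat monoid" where
  "Zm m = \<lparr>carrier = {..<m}, monoid.mult = (\<lambda>x y. (x + y) mod m), one = 0\<rparr>"

lemma Zm_simps[simp]: "carrier (Zm m) = {..<m}" "monoid.mult (Zm m) x y = (x + y) mod m" "one (Zm m) = 0"
  by (simp_all add: Zm_def)

lemma Zm_comm_group: assumes "m > 0" shows "comm_group (Zm m)"
proof (rule comm_groupI)
  fix x assume "x \<in> carrier (Zm m)"
  then show "\<exists>y \<in> carrier (Zm m). y \<otimes>\<^bsub>Zm m\<^esub> x = \<one>\<^bsub>Zm m\<^esub>"
    using assms by (intro bexI[of _ "(m - x) mod m"]) (auto simp: mod_add_left_eq)
qed (use assms in \<open>auto simp: mod_add_left_eq mod_add_right_eq add_ac\<close>)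

lemma Zm_fin: "m > 0 \<Longrightarrow> fin_abgroup (Zm m)"
  by (simp add: fin_abgroup_def Zm_comm_group)

lemma Zm_inv: assumes "m > 0" "x < m" shows "inv\<^bsub>Zm m\<^esub> x = (m - x) mod m"
proof -
  interpret comm_group "Zm m" by (rule Zm_comm_group[OF assms(1)])
  show ?thesis using assms by (intro inv_equality) (auto simp: mod_add_left_eq)
qed

lemma Zm_finprod: assumes "m > 0" "finite A" "f \<in> A \<rightarrow> {..<m}"
  shows "finprod (Zm m) f A = (\<Sum>a\<in>A. f a) mod m"
  using assms(2,3)
proof (induction A rule: finite_induct)
  case empty
  interpret comm_group "Zm m" by (rule Zm_comm_group[OF assms(1)])
  show ?case by simp
next
  case (insert a F)
  interpret comm_group "Zm m" by (rule Zm_comm_group[OF assms(1)])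
  have "finprod (Zm m) f (insert a F) = f a \<otimes>\<^bsub>Zm m\<^esub> finprod (Zm m) f F"
    using insert by (intro finprod_insert) auto
  also have "\<dots> = (f a + (\<Sum>a\<in>F. f a) mod m) mod m" using insert by auto
  also have "\<dots> = (\<Sum>a\<in>insert a F. f a) mod m" using insert by (simp add: mod_add_right_eq)
  finally show ?case .
qed

lemma bd_conv: assumes "m > 0" "b < m"
  shows "((x mod m) + (m - y mod m) mod m) mod m = b \<longleftrightarrow> [int x - int y = int b] (mod int m)"
proof -
  have "int (((x mod m) + (m - y mod m) mod m) mod m) = (int x - int y) mod int m"
  proof -
    have "int (((x mod m) + (m - y mod m) mod m) mod m) = ((int x mod int m) + (int m - int y mod int m) mod int m) mod int m"
      using assms by (simp add: zmod_int of_nat_diff less_imp_le)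
    also have "\<dots> = (int x + (int m - int y)) mod int m"
      by (metis mod_add_eq mod_diff_right_eq)
    also have "\<dots> = (int x - int y + int m) mod int m" by (simp add: algebra_simps)
    also have "\<dots> = (int x - int y) mod int m" by (rule mod_add_self2)
    finally show ?thesis .
  qed
  then show ?thesis using assms unfolding cong_def
    by (metis mod_less of_nat_eq_iff zmod_int)
qed

definition sumset :: "nat \<Rightarrow> nat set \<Rightarrow> nat set \<Rightarrow> nat set" where
  "sumset p A B = {(a + b) mod p | a b. a \<in> A \<and> b \<in> B}"

lemma sumset_sub: "p > 0 \<Longrightarrow> sumset p A B \<subseteq> {..<p}"
  by (auto simp: sumset_def)

lemma closed_full:
  fixes p d a0 :: nat and A :: "nat set"
  assumes p: "Factorial_Ring.prime p" and A: "A \<subseteq> {..<p}" and a0: "a0 \<in> A" and d: "0 < d" "d < p"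
    and cl: "\<forall>a\<in>A. (a + d) mod p \<in> A"
  shows "{..<p} \<subseteq> A"
proof
  fix y assume y: "y \<in> {..<p}"
  have iter: "(a0 + j * d) mod p \<in> A" for j :: nat
  proof (induction j)
    case 0 then show ?case using a0 A by auto
  next
    case (Suc j)
    have "(a0 + Suc j * d) mod p = ((a0 + j * d) mod p + d) mod p"
      unfolding mod_add_left_eq by (simp add: add_ac)
    then show ?case using Suc cl by auto
  qed
  have "\<not> p dvd d" using d by (auto dest: dvd_imp_le)
  then have "coprime d p" using p prime_imp_coprime coprime_commute by blast
  then obtain x where x: "[d * x = Suc 0] (mod p)" using cong_solve_coprime_nat by blast
  have a0p: "a0 < p" using a0 A by auto
  have "[d * x * (y + p - a0) = Suc 0 * (y + p - a0)] (mod p)"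
    by (rule cong_mult[OF x cong_refl])
  then have "[a0 + d * x * (y + p - a0) = a0 + (y + p - a0)] (mod p)"
    by (simp add: cong_add_lcancel_nat)
  moreover have "a0 + (y + p - a0) = y + p" using a0p by simp
  ultimately have "(a0 + (x * (y + p - a0)) * d) mod p = y mod p"
    by (simp add: cong_def mult_ac)
  then have "(a0 + (x * (y + p - a0)) * d) mod p = y" using y by simp
  then show "y \<in> A" using iter by metis
qed

lemma t1: fixes b1 b2 p :: nat assumes "b2 < b1" "b1 < p" shows "(b1 + p - b2) mod p = b1 - b2"
proof -
  have "b1 + p - b2 = (b1 - b2) + p" using assms by simp
  then have "(b1 + p - b2) mod p = (b1 - b2) mod p" by (simp only: mod_add_self2)
  then show ?thesis using assms by simp
qed
lemma t3: fixes a b1 b2 p d :: nat assumes "b2 < p" "d = (b1 + p - b2) mod p"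
  shows "(a + d) mod p = (b1 + (a + p - b2) mod p) mod p"
proof -
          have "(a + d) mod p = (a + (b1 + p - b2)) mod p" by (simp add: assms mod_add_right_eq)
          also have "a + (b1 + p - b2) = b1 + (a + p - b2)" using assms by arith
          also have "(b1 + (a + p - b2)) mod p = (b1 + (a + p - b2) mod p) mod p" by (simp add: mod_add_right_eq)
          finally show ?thesis .
qed
lemma t2: fixes b1 b2 p :: nat assumes "b1 < b2" "b2 < p" shows "(b1 + p - b2) mod p > 0"
proof -
  have "b1 + p - b2 < p" "b1 + p - b2 > 0" using assms by auto
  then show ?thesis by simp
qed

lemma CD:
  fixes p :: nat
  assumes p: "Factorial_Ring.prime p"
  shows "A \<subseteq> {..<p} \<Longrightarrow> B \<subseteq> {..<p} \<Longrightarrow> A \<noteq> {} \<Longrightarrow> B \<noteq> {} \<Longrightarrow>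
    min p (card A + card B - 1) \<le> card (sumset p A B)"
proof (induction "card B" arbitrary: A B rule: less_induct)
  case less
  have p0: "p > 0" using p prime_gt_0_nat by blast
  have fA: "finite A" and fB: "finite B" using less.prems finite_subset by blast+
  have fS: "finite (sumset p A B)" using sumset_sub[OF p0] finite_subset by blast
  have cB: "card B \<ge> 1" using fB less.prems by (simp add: Suc_leI card_gt_0_iff)
  show ?case
  proof (cases "card B = 1")
    case True
    then obtain b where Bb: "B = {b}" by (auto simp: card_Suc_eq)
    have "sumset p A B = (\<lambda>a. (a + b) mod p) ` A" by (auto simp: sumset_def Bb)
    moreover have "inj_on (\<lambda>a. (a + b) mod p) A"
    proof
      fix x y assume "x \<in> A" "y \<in> A" "(x + b) mod p = (y + b) mod p"
      then have "[x = y] (mod p)" using cong_add_rcancel_nat unfolding cong_def by blast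
      moreover have "x < p" "y < p" using \<open>x \<in> A\<close> \<open>y \<in> A\<close> less.prems(1) by auto
      ultimately show "x = y" by (simp add: cong_def)
    qed
    ultimately show ?thesis using True by (simp add: card_image)
  next
    case False
    then have cB2: "card B \<ge> 2" using cB by simp
    show ?thesis
    proof (cases "p \<le> card (sumset p A B)")
      case True then show ?thesis by simp
    next
      case small: False
      have "\<exists>a\<in>A. \<exists>b\<in>B. \<exists>b'\<in>B. (b' + (a + p - b) mod p) mod p \<notin> A"
      proof (rule ccontr)
        assume "\<not> ?thesis"
        then have cl0: "\<forall>a\<in>A. \<forall>b\<in>B. \<forall>b'\<in>B. (b' + (a + p - b) mod p) mod p \<in> A" by blast
        obtain b1 b2 where b12: "b1 \<in> B" "b2 \<in> B" "b1 \<noteq> b2"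
        proof -
          have "\<not> card B \<le> Suc 0" using cB2 by simp
          then show ?thesis using that card_le_Suc0_iff_eq[OF fB] by blast
        qed
        define d where "d = (b1 + p - b2) mod p"
        have b1p: "b1 < p" and b2p: "b2 < p" using b12(1,2) less.prems(2) by auto
        have dp: "d < p" using p0 by (simp add: d_def)
        have d0: "d > 0"
        proof (cases "b2 < b1")
          case True
          then show ?thesis using t1[OF True b1p] by (simp add: d_def)
        next
          case False
          then have "b1 < b2" using b12 by simp
          then show ?thesis using t2[OF _ b2p] by (simp add: d_def)
        qed
        have "\<forall>a\<in>A. (a + d) mod p \<in> A"
        proof
          fix a assume a: "a \<in> A"
          have eq: "(a + d) mod p = (b1 + (a + p - b2) mod p) mod p" by (rule t3[OF b2p d_def])
          have "(b1 + (a + p - b2) mod p) mod p \<in> A" using cl0 a b12 by blast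
          then show "(a + d) mod p \<in> A" using eq by simp
        qed
        then have "{..<p} \<subseteq> A" 
        proof -
          obtain a0 where "a0 \<in> A" using less.prems(3) by blast
          then show ?thesis using closed_full[OF p less.prems(1) _ d0 dp] \<open>\<forall>a\<in>A. (a + d) mod p \<in> A\<close> by blast
        qed
        then have "{..<p} \<subseteq> sumset p A B"
        proof -
          assume sub: "{..<p} \<subseteq> A"
          show ?thesis
          proof
            fix y assume y: "y \<in> {..<p}"
            have "((y + p - b1) mod p + b1) mod p = (y + p - b1 + b1) mod p" by (simp add: mod_add_left_eq)
            also have "\<dots> = y" using b1p y by simp
            finally have "y = ((y + p - b1) mod p + b1) mod p" by simp
            moreover have "(y + p - b1) mod p \<in> A" using sub p0 by auto
            ultimately show "y \<in> sumset p A B" unfolding sumset_def using b12 by blast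
          qed
        qed
        then have "card {..<p} \<le> card (sumset p A B)" using fS by (rule card_mono[rotated])
        then have "p \<le> card (sumset p A B)" by simp
        then show False using small by simp
      qed
      then obtain a b b' where ab: "a \<in> A" "b \<in> B" "b' \<in> B" and nb': "(b' + (a + p - b) mod p) mod p \<notin> A"
        by blast
      define e where "e = (a + p - b) mod p"
      define sh where "sh x = (x + e) mod p" for x
      define A' where "A' = A \<union> sh ` B"
      define B' where "B' = {x\<in>B. sh x \<in> A}"
      have ap: "a < p" and bp: "b < p" using ab less.prems by auto
      have shb: "sh b = a"
      proof -
        have "sh b = (b + (a + p - b)) mod p" by (simp add: sh_def e_def mod_add_right_eq)
        also have "\<dots> = a" using ap bp by simp
        finally show ?thesis .
      qed
      have bB': "b \<in> B'" using shb ab by (simp add: B'_def)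
      have b'B': "b' \<notin> B'" using nb' by (simp add: B'_def sh_def e_def)
      have B'B: "B' \<subseteq> B" by (auto simp: B'_def)
      have cB': "card B' < card B" 
      proof (rule psubset_card_mono[OF fB])
        show "B' \<subset> B" using B'B b'B' ab by blast
      qed
      have A'p: "A' \<subseteq> {..<p}" using less.prems p0 by (auto simp: A'_def sh_def)
      have B'p: "B' \<subseteq> {..<p}" using B'B less.prems by auto
      have IH: "min p (card A' + card B' - 1) \<le> card (sumset p A' B')"
        using less.hyps[OF cB' A'p B'p] bB' ab by (auto simp: A'_def)
      have sub: "sumset p A' B' \<subseteq> sumset p A B"
      proof
        fix y assume "y \<in> sumset p A' B'"
        then obtain u x where y: "y = (u + x) mod p" and u: "u \<in> A'" and x: "x \<in> B'"
          by (auto simp: sumset_def)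
        show "y \<in> sumset p A B"
        proof (cases "u \<in> A")
          case True then show ?thesis using x y B'B unfolding sumset_def by blast
        next
          case False
          then obtain z where z: "z \<in> B" "u = sh z" using u by (auto simp: A'_def)
          have "y = ((z + e) mod p + x) mod p" using y z by (simp add: sh_def)
          also have "\<dots> = (z + e + x) mod p" by (rule mod_add_left_eq)
          also have "\<dots> = (x + e + z) mod p" by (simp add: add_ac)
          also have "\<dots> = ((x + e) mod p + z) mod p" by (rule mod_add_left_eq[symmetric])
          also have "\<dots> = (sh x + z) mod p" by (simp add: sh_def)
          finally show ?thesis using x z unfolding sumset_def B'_def by blast
        qed
      qed
      have inj: "inj_on sh B"
      proof
        fix x y assume "x \<in> B" "y \<in> B" "sh x = sh y"
        then have "[x = y] (mod p)" using cong_add_rcancel_nat unfolding cong_def sh_def by blast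
        moreover have "x < p" "y < p" using \<open>x \<in> B\<close> \<open>y \<in> B\<close> less.prems(2) by auto
        ultimately show "x = y" by (simp add: cong_def)
      qed
      have "sh ` B - A = sh ` (B - B')" by (auto simp: B'_def)
      then have c1: "card (sh ` B - A) = card B - card B'"
        using inj fB B'B by (simp add: card_image inj_on_diff card_Diff_subset finite_subset)
      have "A' = A \<union> (sh ` B - A)" by (auto simp: A'_def)
      moreover have "card (A \<union> (sh ` B - A)) = card A + card (sh ` B - A)"
        by (rule card_Un_disjoint) (use fA fB in auto)
      ultimately have "card A' = card A + card (sh ` B - A)" by simp
      then have "card A' + card B' = card A + card B" using c1 cB' by simp
      then show ?thesis using IH card_mono[OF fS sub] by simp
    qed
  qed
qed

definition Tk :: "nat \<Rightarrow> (nat \<Rightarrow> nat set) \<Rightarrow> nat \<Rightarrow> nat set" where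
  "Tk p XS k = {(\<Sum>i<k. x i) mod p | x. \<forall>i<k. x i \<in> XS i}"

lemma Tk_Suc: "Tk p XS (Suc k) = sumset p (Tk p XS k) (XS k)"
proof
  show "Tk p XS (Suc k) \<subseteq> sumset p (Tk p XS k) (XS k)"
  proof
    fix y assume "y \<in> Tk p XS (Suc k)"
    then obtain x where y: "y = (\<Sum>i<Suc k. x i) mod p" and x: "\<forall>i<Suc k. x i \<in> XS i"
      by (auto simp: Tk_def)
    have "y = ((\<Sum>i<k. x i) mod p + x k) mod p" using y by (simp add: mod_add_left_eq)
    moreover have "(\<Sum>i<k. x i) mod p \<in> Tk p XS k" using x by (auto simp: Tk_def)
    ultimately show "y \<in> sumset p (Tk p XS k) (XS k)" using x unfolding sumset_def by blast
  qed
next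
  show "sumset p (Tk p XS k) (XS k) \<subseteq> Tk p XS (Suc k)"
  proof
    fix y assume "y \<in> sumset p (Tk p XS k) (XS k)"
    then obtain x b where y: "y = ((\<Sum>i<k. x i) mod p + b) mod p" and x: "\<forall>i<k. x i \<in> XS i" and b: "b \<in> XS k"
      by (auto simp: sumset_def Tk_def)
    define x' where "x' = x(k := b)"
    have "(\<Sum>i<k. x' i) = (\<Sum>i<k. x i)" by (intro sum.cong) (auto simp: x'_def)
    then have "y = (\<Sum>i<Suc k. x' i) mod p" using y by (simp add: mod_add_left_eq x'_def)
    moreover have "\<forall>i<Suc k. x' i \<in> XS i" using x b by (auto simp: x'_def less_Suc_eq)
    ultimately show "y \<in> Tk p XS (Suc k)" by (auto simp: Tk_def)
  qed
qed

lemma Tk_sub: "p > 0 \<Longrightarrow> Tk p XS k \<subseteq> {..<p}" by (auto simp: Tk_def)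

lemma Tk_ne: assumes "\<forall>i<k. XS i \<noteq> {}" shows "Tk p XS k \<noteq> {}"
proof -
  define x0 where "x0 i = (SOME y. y \<in> XS i)" for i
  have "\<forall>i<k. x0 i \<in> XS i" using assms unfolding x0_def by (simp add: some_in_eq)
  then have "(\<Sum>i<k. x0 i) mod p \<in> Tk p XS k" unfolding Tk_def by (intro CollectI exI[of _ x0]) simp
  then show ?thesis by blast
qed

lemma Tk0: "Tk p XS 0 = {0}" by (simp add: Tk_def)
lemma arith1: fixes p T c S k Tn :: nat
  assumes "min p (T + c - 1) \<le> Tn" "min p (S + 1 - k) \<le> T" "k \<le> S" "1 \<le> c"
  shows "min p (S + c + 1 - Suc k) \<le> Tn"
  using assms unfolding min_def by (auto split: if_splits)

lemma CDk:
  fixes p :: nat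
  assumes p: "Factorial_Ring.prime p"
  shows "\<forall>i<k. XS i \<subseteq> {..<p} \<and> XS i \<noteq> {} \<Longrightarrow>
    min p ((\<Sum>i<k. card (XS i)) + 1 - k) \<le> card (Tk p XS k)"
proof (induction k)
  case 0
  show ?case by (simp add: Tk0)
next
  case (Suc k)
  have p0: "p > 0" using p prime_gt_0_nat by blast
  have IH: "min p ((\<Sum>i<k. card (XS i)) + 1 - k) \<le> card (Tk p XS k)" using Suc by auto
  have Xk: "XS k \<subseteq> {..<p}" "XS k \<noteq> {}" using Suc.prems by auto
  have "finite (XS k)" using Xk(1) finite_subset by blast
  then have c1: "card (XS k) \<ge> 1" using Xk(2) by (simp add: Suc_leI card_gt_0_iff)
  have "(\<Sum>i<k. (1::nat)) \<le> (\<Sum>i<k. card (XS i))"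
  proof (intro sum_mono)
    fix i assume "i \<in> {..<k}"
    then have "XS i \<subseteq> {..<p}" "XS i \<noteq> {}" using Suc.prems by auto
    moreover have "finite (XS i)" using \<open>XS i \<subseteq> {..<p}\<close> finite_subset by blast
    ultimately show "1 \<le> card (XS i)" by (simp add: Suc_leI card_gt_0_iff)
  qed
  then have Sk: "(\<Sum>i<k. card (XS i)) \<ge> k" by simp
  have "min p (card (Tk p XS k) + card (XS k) - 1) \<le> card (sumset p (Tk p XS k) (XS k))"
    using CD[OF p Tk_sub[OF p0] Xk(1) Tk_ne Xk(2)] Suc.prems by auto
  then have "min p (card (Tk p XS k) + card (XS k) - 1) \<le> card (Tk p XS (Suc k))" by (simp add: Tk_Suc)
    moreover have "(\<Sum>i<Suc k. card (XS i)) = (\<Sum>i<k. card (XS i)) + card (XS k)" by simp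
  ultimately show ?case using arith1[OF _ IH Sk c1] by simp
qed

definition tlv :: "nat \<Rightarrow> nat \<Rightarrow> nat" where "tlv L e = (if e mod L = 0 then 0 else e + 2)"
definition hdv :: "nat \<Rightarrow> nat \<Rightarrow> nat" where "hdv L e = (if e mod L = L - 1 then 1 else e + 3)"
definition endsG :: "nat \<Rightarrow> nat \<Rightarrow> nat \<times> nat" where "endsG L e = (tlv L e, hdv L e)"
definition IG :: "nat \<Rightarrow> nat \<Rightarrow> nat set" where "IG k L = (\<lambda>e. e + 2) ` {e. e < k * L \<and> e mod L \<noteq> 0}"
definition VG :: "nat \<Rightarrow> nat \<Rightarrow> nat set" where "VG k L = insert 0 (insert 1 (IG k L))"

lemma IG_fin: "finite (IG k L)" by (simp add: IG_def)
lemma IG_01: "0 \<notin> IG k L" "1 \<notin> IG k L" by (auto simp: IG_def)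
lemma VG_fin: "finite (VG k L)" by (simp add: VG_def IG_fin)

lemma mod_div_ij: fixes L i j :: nat assumes "j < L" shows "(i * L + j) mod L = j" "(i * L + j) div L = i"
  using assms by auto

lemma edge_decomp: fixes e L :: nat assumes "L > 0" obtains i j where "e = i * L + j" "j < L"
  using assms by (metis mod_less_divisor mult.commute div_mult_mod_eq)

lemma edge_lt: fixes i j k L :: nat assumes "i < k" "j < L" shows "i * L + j < k * L"
proof -
  have "i * L + j < i * L + L" using assms by simp
  also have "\<dots> = Suc i * L" by simp
  also have "\<dots> \<le> k * L" using assms by (intro mult_le_mono1) simp
  finally show ?thesis .
qed

lemma edge_i_lt: fixes i j k L :: nat assumes "i * L + j < k * L" "j < L" shows "i < k"
proof (rule ccontr)
  assume "\<not> i < k"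
  then have "k \<le> i" by simp
  then have "k * L \<le> i * L" by (rule mult_le_mono1)
  then show False using assms by linarith
qed

lemma multigraph_G: assumes "L > 0" shows "multigraph (VG k L) {..<k * L} (endsG L)"
  unfolding multigraph_def
proof (intro conjI VG_fin finite_lessThan ballI)
  fix e assume e: "e \<in> {..<k * L}"
  obtain i j where ij: "e = i * L + j" "j < L" using edge_decomp[OF assms] by blast
  have ik: "i < k" using edge_i_lt e ij by simp
  show "fst (endsG L e) \<in> VG k L"
  proof (cases "j = 0")
    case True then show ?thesis using ij by (simp add: endsG_def tlv_def VG_def)
  next
    case False
    then have "e \<in> {e. e < k * L \<and> e mod L \<noteq> 0}" using ij e by simp
    then have "e + 2 \<in> IG k L" unfolding IG_def by blast
    then show ?thesis using ij False by (simp add: endsG_def tlv_def VG_def)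
  qed
  show "snd (endsG L e) \<in> VG k L"
  proof (cases "j = L - 1")
    case True
    have "e mod L = L - 1" using ij True mod_div_ij(1)[of j L i] by simp
    then show ?thesis by (simp add: endsG_def hdv_def VG_def)
  next
    case False
    then have j1: "j + 1 < L" using ij by simp
    have "e + 1 = i * L + (j + 1)" using ij by simp
    then have "e + 1 < k * L" "(e + 1) mod L \<noteq> 0" using edge_lt[OF ik j1] j1 by (simp_all add: mod_div_ij)
    then have "(e + 1) + 2 \<in> IG k L" unfolding IG_def by blast
    moreover have "(e + 1) + 2 = e + 3" by simp
    ultimately have mem: "e + 3 \<in> IG k L" by metis
    have "e mod L = j" using ij mod_div_ij(1) by blast
    then have "snd (endsG L e) = e + 3" using False by (simp add: endsG_def hdv_def)
    then show ?thesis using mem by (simp add: VG_def)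
  qed
  show "fst (endsG L e) \<noteq> snd (endsG L e)" by (simp add: endsG_def tlv_def hdv_def)
qed

lemma out0: "{e \<in> {..<k * L}. fst (endsG L e) = 0} = {e \<in> {..<k * L}. e mod L = 0}"
  by (auto simp: endsG_def tlv_def)
lemma in0: "{e \<in> {..<k * L}. snd (endsG L e) = 0} = {}"
  by (auto simp: endsG_def hdv_def)

lemma out0_img: fixes k L :: nat assumes "L > 0" shows "{e \<in> {..<k * L}. e mod L = 0} = (\<lambda>i. i * L) ` {..<k}"
proof
  show "{e \<in> {..<k * L}. e mod L = 0} \<subseteq> (\<lambda>i. i * L) ` {..<k}"
  proof
    fix e assume e: "e \<in> {e \<in> {..<k * L}. e mod L = 0}"
    obtain i j where ij: "e = i * L + j" "j < L" using edge_decomp[OF assms] by blast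
    have j0: "j = 0" using e ij by (simp add: mod_div_ij)
    have "i < k" using e ij j0 assms by simp
    then show "e \<in> (\<lambda>i. i * L) ` {..<k}" using ij j0 by simp
  qed
  show "(\<lambda>i. i * L) ` {..<k} \<subseteq> {e \<in> {..<k * L}. e mod L = 0}"
    using edge_lt[of _ k 0 L] assms by auto
qed

lemma inj_mulL: "L > 0 \<Longrightarrow> inj_on (\<lambda>i. i * (L::nat)) A"
  by (auto simp: inj_on_def)

lemma out_int: assumes "i < k" "0 < j" "j < L"
  shows "{e \<in> {..<k * L}. fst (endsG L e) = i * L + j + 2} = {i * L + j}"
proof -
  have "i * L + j < k * L" using edge_lt assms by simp
  moreover have "(i * L + j) mod L \<noteq> 0" using assms by (simp add: mod_div_ij)
  ultimately show ?thesis by (auto simp: endsG_def tlv_def)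
qed

lemma in_int: assumes "i < k" "0 < j" "j < L"
  shows "{e \<in> {..<k * L}. snd (endsG L e) = i * L + j + 2} = {i * L + (j - 1)}"
proof -
  have "i * L + (j - 1) < k * L" using edge_lt[of i k "j - 1" L] assms by simp
  moreover have "(i * L + (j - 1)) mod L = j - 1" by (rule mod_div_ij(1)) (use assms in simp)
  moreover have "j - 1 \<noteq> L - 1" using assms by simp
  moreover have "i * L + (j - 1) + 3 = i * L + j + 2" using assms by simp
  ultimately show ?thesis by (auto simp: endsG_def hdv_def)
qed

lemma IG_char: assumes "L > 0" "v \<in> IG k L"
  obtains i j where "i < k" "0 < j" "j < L" "v = i * L + j + 2"
proof -
  obtain e where e: "e < k * L" "e mod L \<noteq> 0" "v = e + 2" using assms(2) by (auto simp: IG_def)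
  obtain i j where ij: "e = i * L + j" "j < L" using edge_decomp[OF assms(1)] by blast
  have "i < k" using edge_i_lt e ij by simp
  moreover have "0 < j" using e ij by (simp add: mod_div_ij)
  ultimately show ?thesis using that ij e by blast
qed

definition bdy :: "('e \<Rightarrow> 'v \<times> 'v) \<Rightarrow> 'e set \<Rightarrow> ('e \<Rightarrow> nat) \<Rightarrow> 'v \<Rightarrow> int" where
  "bdy D E f v = int (\<Sum>e\<in>{e\<in>E. fst (D e) = v}. f e) - int (\<Sum>e\<in>{e\<in>E. snd (D e) = v}. f e)"

lemma Zm_char:
  fixes V :: "'v set" and E :: "'e set"
  assumes m: "m > 0" and fV: "finite V" and fE: "finite E"
  shows "group_connected (Zm m) V E ends \<longleftrightarrow>
    (\<exists>D. (\<forall>e\<in>E. D e = ends e \<or> D e = prod.swap (ends e)) \<and>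
       (\<forall>\<beta> \<in> V \<rightarrow> {..<m}. (\<Sum>v\<in>V. \<beta> v) mod m = 0 \<longrightarrow>
          (\<exists>f \<in> E \<rightarrow> {..<m}. (\<forall>e\<in>E. f e \<noteq> 0) \<and>
             (\<forall>v\<in>V. [bdy D E f v = int (\<beta> v)] (mod int m)))))"
proof -
  have r1: "(finprod (Zm m) \<beta> V = \<one>\<^bsub>Zm m\<^esub>) = ((\<Sum>v\<in>V. \<beta> v) mod m = 0)"
    if "\<beta> \<in> V \<rightarrow> {..<m}" for \<beta> :: "'v \<Rightarrow> nat"
    using Zm_finprod[OF m fV that] by simp
  have r2: "(finprod (Zm m) f {e\<in>E. fst (D e) = v} \<otimes>\<^bsub>Zm m\<^esub>
              inv\<^bsub>Zm m\<^esub> (finprod (Zm m) f {e\<in>E. snd (D e) = v}) = \<beta> v)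
          = [bdy D E f v = int (\<beta> v)] (mod int m)"
    if "\<beta> \<in> V \<rightarrow> {..<m}" "v \<in> V" "f \<in> E \<rightarrow> {..<m}" for \<beta> :: "'v \<Rightarrow> nat" and f D v
  proof -
    have f1: "f \<in> {e\<in>E. fst (D e) = v} \<rightarrow> {..<m}" "f \<in> {e\<in>E. snd (D e) = v} \<rightarrow> {..<m}"
      using that(3) by auto
    have e1: "finprod (Zm m) f {e\<in>E. fst (D e) = v} = (\<Sum>e\<in>{e\<in>E. fst (D e) = v}. f e) mod m"
      by (rule Zm_finprod[OF m _ f1(1)]) (use fE in simp)
    have e2: "finprod (Zm m) f {e\<in>E. snd (D e) = v} = (\<Sum>e\<in>{e\<in>E. snd (D e) = v}. f e) mod m"
      by (rule Zm_finprod[OF m _ f1(2)]) (use fE in simp)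
    have bv: "\<beta> v < m" using that(1,2) by auto
    show ?thesis unfolding e1 e2 using Zm_inv[OF m] bd_conv[OF m bv] m
      by (simp add: bdy_def)
  qed
  show ?thesis unfolding group_connected_def
    using r1 r2 by (simp cong: ball_cong_simp bex_cong_simp conj_cong)
qed

lemma sum_bdy:
  assumes fV: "finite V" and fE: "finite E" and D: "\<forall>e\<in>E. fst (D e) \<in> V \<and> snd (D e) \<in> V"
  shows "(\<Sum>v\<in>V. bdy D E f v) = 0"
proof -
  have g1: "(\<Sum>v\<in>V. (\<Sum>e\<in>{e\<in>E. fst (D e) = v}. f e)) = (\<Sum>e\<in>E. f e)"
    by (rule sum.group[OF fE fV]) (use D in auto)
  have g2: "(\<Sum>v\<in>V. (\<Sum>e\<in>{e\<in>E. snd (D e) = v}. f e)) = (\<Sum>e\<in>E. f e)"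
    by (rule sum.group[OF fE fV]) (use D in auto)
  have "(\<Sum>v\<in>V. bdy D E f v) = int (\<Sum>v\<in>V. (\<Sum>e\<in>{e\<in>E. fst (D e) = v}. f e))
        - int (\<Sum>v\<in>V. (\<Sum>e\<in>{e\<in>E. snd (D e) = v}. f e))"
    by (simp add: bdy_def sum_subtractf)
  then show ?thesis using g1 g2 by simp
qed

lemma last_vertex:
  fixes \<beta> :: "'v \<Rightarrow> nat" and m :: int
  assumes fV: "finite V" and fE: "finite E" and D: "\<forall>e\<in>E. fst (D e) \<in> V \<and> snd (D e) \<in> V"
    and w: "w \<in> V" and sb: "m dvd int (\<Sum>v\<in>V. \<beta> v)"
    and others: "\<forall>v\<in>V - {w}. [bdy D E f v = int (\<beta> v)] (mod m)"
  shows "[bdy D E f w = int (\<beta> w)] (mod m)"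
proof -
  have s0: "bdy D E f w + (\<Sum>v\<in>V - {w}. bdy D E f v) = 0"
    using sum_bdy[OF fV fE D, of f] sum.remove[OF fV w, of "bdy D E f"] by simp
  have s1: "int (\<beta> w) + (\<Sum>v\<in>V - {w}. int (\<beta> v)) = int (\<Sum>v\<in>V. \<beta> v)"
    using sum.remove[OF fV w, of "\<lambda>v. int (\<beta> v)"] by simp
  have d1: "m dvd (\<Sum>v\<in>V - {w}. bdy D E f v - int (\<beta> v))"
    using others by (intro dvd_sum) (simp add: cong_iff_dvd_diff)
  have "bdy D E f w - int (\<beta> w) = - (\<Sum>v\<in>V - {w}. bdy D E f v - int (\<beta> v)) - int (\<Sum>v\<in>V. \<beta> v)"
    using s0 s1 by (simp add: sum_subtractf algebra_simps)
  then have "m dvd (bdy D E f w - int (\<beta> w))" using d1 sb by simp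
  then show ?thesis by (simp add: cong_iff_dvd_diff)
qed

lemma int_filter: "finite E \<Longrightarrow> int (\<Sum>e\<in>{e\<in>E. P e}. f e) = (\<Sum>e\<in>E. if P e then int (f e) else 0)"
  by (simp add: sum.inter_filter[symmetric] of_nat_sum)

lemma bdy_sum: "finite E \<Longrightarrow> bdy D E f v =
  (\<Sum>e\<in>E. (if fst (D e) = v then int (f e) else 0) - (if snd (D e) = v then int (f e) else 0))"
proof -
  assume fE: "finite E"
  show ?thesis unfolding bdy_def int_filter[OF fE] by (simp only: sum_subtractf)
qed

lemma orient_change:
  fixes m :: nat
  assumes fE: "finite E" and m: "m > 0"
    and D: "\<forall>e\<in>E. D e = ends e \<or> D e = prod.swap (ends e)"
    and f: "f \<in> E \<rightarrow> {..<m}" "\<forall>e\<in>E. f e \<noteq> 0"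
  defines "gg \<equiv> \<lambda>e. if D e = ends e then f e else m - f e"
  shows "gg \<in> E \<rightarrow> {..<m}" "\<forall>e\<in>E. gg e \<noteq> 0" "[bdy ends E gg v = bdy D E f v] (mod int m)"
proof -
  show "gg \<in> E \<rightarrow> {..<m}" using f by (auto simp: gg_def Pi_def)
  show "\<forall>e\<in>E. gg e \<noteq> 0" using f by (auto simp: gg_def)
  have "int m dvd (\<Sum>e\<in>E. ((if fst (ends e) = v then int (gg e) else 0) - (if snd (ends e) = v then int (gg e) else 0))
     - ((if fst (D e) = v then int (f e) else 0) - (if snd (D e) = v then int (f e) else 0)))"
  proof (intro dvd_sum)
    fix e assume e: "e \<in> E"
    show "int m dvd ((if fst (ends e) = v then int (gg e) else 0) - (if snd (ends e) = v then int (gg e) else 0))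
     - ((if fst (D e) = v then int (f e) else 0) - (if snd (D e) = v then int (f e) else 0))"
    proof (cases "D e = ends e")
      case True then show ?thesis by (simp add: gg_def)
    next
      case False
      then have De: "D e = prod.swap (ends e)" using D e by auto
      have fe: "f e < m" using f e by auto
      then have ge: "int (gg e) = int m - int (f e)" using False by (simp add: gg_def of_nat_diff)
      have "((if fst (ends e) = v then int (gg e) else 0) - (if snd (ends e) = v then int (gg e) else 0))
     - ((if fst (D e) = v then int (f e) else 0) - (if snd (D e) = v then int (f e) else 0))
       = int m * ((if fst (ends e) = v then 1 else 0) - (if snd (ends e) = v then 1 else 0))"
        unfolding ge De by (simp add: prod.swap_def split: if_splits)
      then show ?thesis by simp
    qed
  qed
  then show "[bdy ends E gg v = bdy D E f v] (mod int m)"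
    by (simp add: bdy_sum[OF fE] cong_iff_dvd_diff sum_subtractf)
qed

fun pc :: "(nat \<Rightarrow> nat) \<Rightarrow> nat \<Rightarrow> nat \<Rightarrow> nat" where
  "pc \<beta> L 0 = 0"
| "pc \<beta> L (Suc e) = (if Suc e mod L = 0 then 0 else pc \<beta> L e + \<beta> (Suc e + 2))"

declare pc.simps[simp del]

lemma pc0: "pc \<beta> L (i * L) = 0"
proof (cases "i * L")
  case 0 then show ?thesis unfolding 0 by (simp add: pc.simps)
next
  case (Suc n)
  have "i * L mod L = 0" by simp
  then have "Suc n mod L = 0" using Suc by simp
  then show ?thesis unfolding Suc by (simp add: pc.simps)
qed

lemma pcS: assumes "0 < j" "j < L"
  shows "pc \<beta> L (i * L + j) = pc \<beta> L (i * L + (j - 1)) + \<beta> (i * L + j + 2)"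
proof -
  have m: "Suc (i * L + (j - 1)) = i * L + j" using assms by simp
  have "(i * L + j) mod L = j" using assms by simp
  then have "Suc (i * L + (j - 1)) mod L \<noteq> 0" unfolding m using assms by simp
  then have "pc \<beta> L (Suc (i * L + (j - 1))) = pc \<beta> L (i * L + (j - 1)) + \<beta> (Suc (i * L + (j - 1)) + 2)"
    by (simp only: pc.simps if_False)
  then show ?thesis unfolding m .
qed

lemma zero_sum: fixes x c p :: nat assumes "x < p" "(x + c) mod p = 0" shows "x = (p - c mod p) mod p"
proof -
  have r: "c mod p < p" using assms by simp
  have "(x + c mod p) mod p = 0" using assms(2) by (simp add: mod_add_right_eq)
  then have "p dvd (x + c mod p)" by (simp add: mod_eq_0_iff_dvd)
  then obtain q where q: "x + c mod p = p * q" by (auto simp: dvd_def)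
  have "x + c mod p < p * 2" using assms(1) r by linarith
  then have "p * q < p * 2" using q by simp
  then have "q < 2" by simp
  then have "q = 0 \<or> q = 1" by auto
  then show ?thesis
  proof
    assume "q = 0" then show ?thesis using q by simp
  next
    assume "q = 1" then have "x = p - c mod p" using q by simp
    then show ?thesis using assms by simp
  qed
qed

lemma cong_step: fixes a b p :: nat
  shows "[int ((a + b) mod p) - int (a mod p) = int b] (mod int p)"
proof -
  have "[int ((a + b) mod p) = int (a + b)] (mod int p)" by (simp add: cong_def zmod_int)
  moreover have "[int (a mod p) = int a] (mod int p)" by (simp add: cong_def zmod_int)
  ultimately have "[int ((a + b) mod p) - int (a mod p) = int (a + b) - int a] (mod int p)"
    by (rule cong_diff)
  then show ?thesis by simp
qed

lemma conn_p:
  fixes p k L :: nat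
  assumes p: "Factorial_Ring.prime p" and L: "0 < L" "L < p" and k: "0 < k"
    and kk: "p + k - 1 \<le> k * (p - L)"
  shows "group_connected (Zm p) (VG k L) {..<k * L} (endsG L)"
proof -
  have p0: "p > 0" using p prime_gt_0_nat by blast
  have mg: "multigraph (VG k L) {..<k * L} (endsG L)" by (rule multigraph_G[OF L(1)])
  then have Dv: "\<forall>e\<in>{..<k * L}. fst (endsG L e) \<in> VG k L \<and> snd (endsG L e) \<in> VG k L"
    by (simp add: multigraph_def)
  show ?thesis unfolding Zm_char[OF p0 VG_fin finite_lessThan]
  proof (intro exI[of _ "endsG L"] conjI ballI impI allI)
    fix e assume "e \<in> {..<k * L}"
    show "endsG L e = endsG L e \<or> endsG L e = prod.swap (endsG L e)" by simp
  next
    fix \<beta> assume \<beta>: "\<beta> \<in> VG k L \<rightarrow> {..<p}" and s\<beta>: "(\<Sum>v\<in>VG k L. \<beta> v) mod p = 0"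
    define c where "c = pc \<beta> L"
    define XS where "XS i = {x. x < p \<and> (\<forall>j<L. (x + c (i * L + j)) mod p \<noteq> 0)}" for i
    have XSp: "XS i \<subseteq> {..<p}" for i by (auto simp: XS_def)
    have cardX: "p - L \<le> card (XS i)" for i
    proof -
      define img where "img = (\<lambda>j. (p - c (i * L + j) mod p) mod p) ` {..<L}"
      have sub: "{..<p} - img \<subseteq> XS i"
      proof
        fix x assume x: "x \<in> {..<p} - img"
        have xp: "x < p" using x by simp
        have xi: "x \<notin> img" using x by simp
        have "\<forall>j<L. (x + c (i * L + j)) mod p \<noteq> 0"
        proof (intro allI impI)
          fix j assume j: "j < L"
          show "(x + c (i * L + j)) mod p \<noteq> 0"
          proof
            assume "(x + c (i * L + j)) mod p = 0"
            then have xe: "x = (p - c (i * L + j) mod p) mod p" by (rule zero_sum[OF xp])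
            have "x \<in> img" unfolding img_def xe using j by (intro image_eqI[of _ _ j]) simp_all
            then show False using xi by contradiction
          qed
        qed
        then show "x \<in> XS i" using xp by (simp add: XS_def)
      qed
      have ci: "card img \<le> L" unfolding img_def using card_image_le[of "{..<L}"] by simp
      have fi: "finite img" by (simp add: img_def)
      have "card {..<p} - card img \<le> card ({..<p} - img)"
        by (rule diff_card_le_card_Diff[OF fi])
      also have "\<dots> \<le> card (XS i)" by (rule card_mono[OF finite_subset[OF XSp finite_lessThan] sub])
      finally have "p - card img \<le> card (XS i)" by simp
      then show ?thesis using ci by linarith
    qed
    have XSne: "XS i \<noteq> {}" for i
    proof
      assume "XS i = {}"
      then show False using cardX[of i] L by simp
    qed
    have "(\<Sum>i<k. (p - L)) \<le> (\<Sum>i<k. card (XS i))" by (intro sum_mono cardX)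
    then have sumX: "k * (p - L) \<le> (\<Sum>i<k. card (XS i))" by simp
    have "min p ((\<Sum>i<k. card (XS i)) + 1 - k) \<le> card (Tk p XS k)"
      by (rule CDk[OF p]) (use XSp XSne in blast)
    moreover have "p \<le> (\<Sum>i<k. card (XS i)) + 1 - k" using sumX kk k by linarith
    ultimately have "card {..<p} \<le> card (Tk p XS k)" by simp
    then have Tfull: "Tk p XS k = {..<p}" by (intro card_seteq Tk_sub p0) simp_all
    have "0 \<in> VG k L" by (simp add: VG_def)
    then have "\<beta> 0 \<in> {..<p}" using \<beta> by blast
    then have "\<beta> 0 \<in> Tk p XS k" using Tfull by simp
    then obtain x where x0: "\<beta> 0 = (\<Sum>i<k. x i) mod p" and xX: "\<forall>i<k. x i \<in> XS i"
      unfolding Tk_def by blast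
    define f where "f e = (x (e div L) + c e) mod p" for e
    show "\<exists>f\<in>{..<k * L} \<rightarrow> {..<p}. (\<forall>e\<in>{..<k * L}. f e \<noteq> 0) \<and>
          (\<forall>v\<in>VG k L. [bdy (endsG L) {..<k * L} f v = int (\<beta> v)] (mod int p))"
    proof (intro bexI[of _ f] conjI ballI)
      show "f \<in> {..<k * L} \<rightarrow> {..<p}" using p0 by (simp add: f_def)
    next
      fix e assume e: "e \<in> {..<k * L}"
      obtain i j where ij: "e = i * L + j" "j < L" using edge_decomp[OF L(1)] by blast
      have ik: "i < k" using edge_i_lt e ij by simp
      have "(x i + c (i * L + j)) mod p \<noteq> 0" using xX ik ij by (simp add: XS_def)
      then show "f e \<noteq> 0" using ij L by (simp add: f_def)
    next
      fix v assume v: "v \<in> VG k L"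
      have main: "[bdy (endsG L) {..<k * L} f v = int (\<beta> v)] (mod int p)" if v: "v \<in> VG k L - {1}" for v
      proof (cases "v = 0")
        case True
        have "bdy (endsG L) {..<k * L} f 0 = int (\<Sum>e\<in>{e \<in> {..<k * L}. e mod L = 0}. f e)"
          unfolding bdy_def out0 in0 by simp
        also have "(\<Sum>e\<in>{e \<in> {..<k * L}. e mod L = 0}. f e) = (\<Sum>i<k. f (i * L))"
          unfolding out0_img[OF L(1)] by (simp add: sum.reindex[OF inj_mulL[OF L(1)]])
        also have "\<dots> = (\<Sum>i<k. x i)"
        proof (intro sum.cong refl)
          fix i assume "i \<in> {..<k}"
          then have "x i < p" using xX by (simp add: XS_def)
          then show "f (i * L) = x i" using L by (simp add: f_def c_def pc0)
        qed
        finally have b0: "bdy (endsG L) {..<k * L} f 0 = int (\<Sum>i<k. x i)" .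
        have "[(\<Sum>i<k. x i) = \<beta> 0] (mod p)" using x0 by (simp add: cong_def)
        then have "[int (\<Sum>i<k. x i) = int (\<beta> 0)] (mod int p)" by (simp only: cong_int_iff)
        then show ?thesis unfolding True b0 .
      next
        case False
        then have "v \<in> IG k L" using v unfolding VG_def by blast
        then obtain i j where ij: "i < k" "0 < j" "j < L" "v = i * L + j + 2"
          using IG_char[OF L(1)] by blast
        have A: "bdy (endsG L) {..<k * L} f v = int (f (i * L + j)) - int (f (i * L + (j - 1)))"
          unfolding bdy_def ij(4) out_int[OF ij(1-3)] in_int[OF ij(1-3)] by simp
        have dj: "(i * L + j) div L = i" using ij by (intro mod_div_ij(2)) simp
        have B: "f (i * L + j) = (x i + c (i * L + (j - 1)) + \<beta> v) mod p"
          unfolding f_def dj c_def pcS[OF ij(2,3)] ij(4) by (simp add: add.assoc)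
        have C: "f (i * L + (j - 1)) = (x i + c (i * L + (j - 1))) mod p"
        proof -
          have "(i * L + (j - 1)) div L = i" using ij by (intro mod_div_ij(2)) simp
          then show ?thesis by (simp add: f_def)
        qed
        show ?thesis unfolding A B C by (rule cong_step)
      qed
      show "[bdy (endsG L) {..<k * L} f v = int (\<beta> v)] (mod int p)"
      proof (cases "v = 1")
        case False then show ?thesis using main v by blast
      next
        case True
        have "p dvd (\<Sum>v\<in>VG k L. \<beta> v)" using s\<beta> by (simp add: mod_eq_0_iff_dvd)
        then have "int p dvd int (\<Sum>v\<in>VG k L. \<beta> v)" by (simp only: int_dvd_int_iff)
        moreover have "1 \<in> VG k L" by (simp add: VG_def)
        ultimately show ?thesis using last_vertex[OF VG_fin finite_lessThan Dv, of 1 "int p" \<beta> f] main True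
          by blast
      qed
    qed
  qed
qed

lemma IG_mem: assumes "i < k" "0 < j" "j < L" shows "i * L + j + 2 \<in> IG k L"
proof -
  have "i * L + j < k * L" using edge_lt assms by simp
  moreover have "(i * L + j) mod L \<noteq> 0" using assms by (simp add: mod_div_ij)
  ultimately show ?thesis unfolding IG_def by blast
qed

lemma nconn:
  fixes k L :: nat
  assumes L: "0 < L" and k: "0 < k"
  shows "\<not> group_connected (Zm (2 * L)) (VG k L) {..<k * L} (endsG L)"
proof
  define m where "m = 2 * L"
  have m0: "m > 0" and m2: "m \<ge> 2" using L by (auto simp: m_def)
  assume "group_connected (Zm (2 * L)) (VG k L) {..<k * L} (endsG L)"
  then obtain D where Dv: "\<forall>e\<in>{..<k * L}. D e = endsG L e \<or> D e = prod.swap (endsG L e)"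
    and H: "\<forall>\<beta> \<in> VG k L \<rightarrow> {..<m}. (\<Sum>v\<in>VG k L. \<beta> v) mod m = 0 \<longrightarrow>
          (\<exists>f \<in> {..<k * L} \<rightarrow> {..<m}. (\<forall>e\<in>{..<k * L}. f e \<noteq> 0) \<and>
             (\<forall>v\<in>VG k L. [bdy D {..<k * L} f v = int (\<beta> v)] (mod int m)))"
    unfolding m_def[symmetric] Zm_char[OF m0 VG_fin finite_lessThan] by blast
  define b0 where "b0 = (k + 1) mod 2"
  define nI where "nI = card (IG k L)"
  define \<beta> where "\<beta> v = (if v = 0 then b0 else if v = 1 then (m - b0 + 2 * nI) mod m else m - 2)" for v :: nat
  have b01: "b0 \<le> 1" by (simp add: b0_def)
  have \<beta>P: "\<beta> \<in> VG k L \<rightarrow> {..<m}" using b01 m2 m0 by (auto simp: \<beta>_def)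
  have sIG: "(\<Sum>v\<in>IG k L. \<beta> v) = nI * (m - 2)"
  proof -
    have "(\<Sum>v\<in>IG k L. \<beta> v) = (\<Sum>v\<in>IG k L. m - 2)"
      by (intro sum.cong refl) (use IG_01 in \<open>auto simp: \<beta>_def\<close>)
    then show ?thesis by (simp add: nI_def)
  qed
  have "(\<Sum>v\<in>VG k L. \<beta> v) = \<beta> 0 + (\<beta> 1 + (\<Sum>v\<in>IG k L. \<beta> v))"
    unfolding VG_def using IG_01 IG_fin by simp
  also have "\<dots> = b0 + ((m - b0 + 2 * nI) mod m + nI * (m - 2))" using sIG by (simp add: \<beta>_def)
  finally have sV: "(\<Sum>v\<in>VG k L. \<beta> v) = b0 + ((m - b0 + 2 * nI) mod m + nI * (m - 2))" .
  have "(b0 + ((m - b0 + 2 * nI) mod m + nI * (m - 2))) mod m = (b0 + (m - b0 + 2 * nI) + nI * (m - 2)) mod m"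
    by (metis (no_types, lifting) add.assoc mod_add_left_eq mod_add_right_eq)
  also have "b0 + (m - b0 + 2 * nI) + nI * (m - 2) = m * (1 + nI)"
  proof -
    have "nI * (m - 2) + 2 * nI = nI * m" using m2
      by (metis add.commute add_mult_distrib2 le_add_diff_inverse mult.commute)
    then show ?thesis using b01 m2 by (simp add: algebra_simps)
  qed
  finally have "(\<Sum>v\<in>VG k L. \<beta> v) mod m = 0" using sV by simp
  note ex = H[rule_format, OF \<beta>P this]
  from ex obtain f where fP: "f \<in> {..<k * L} \<rightarrow> {..<m}" and fr: "(\<forall>e\<in>{..<k * L}. f e \<noteq> 0) \<and>
             (\<forall>v\<in>VG k L. [bdy D {..<k * L} f v = int (\<beta> v)] (mod int m))"
    by (rule bexE)
  have f0: "\<forall>e\<in>{..<k * L}. f e \<noteq> 0" and fb: "\<forall>v\<in>VG k L. [bdy D {..<k * L} f v = int (\<beta> v)] (mod int m)"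
    using fr by blast+
  define gg where "gg = (\<lambda>e. if D e = endsG L e then f e else m - f e)"
  have ggP: "gg \<in> {..<k * L} \<rightarrow> {..<m}" and gg0: "\<forall>e\<in>{..<k * L}. gg e \<noteq> 0"
    using orient_change[OF finite_lessThan m0 Dv fP f0] unfolding gg_def by blast+
  have gb: "[bdy (endsG L) {..<k * L} gg v = int (\<beta> v)] (mod int m)" if v: "v \<in> VG k L" for v
  proof -
    have "[bdy (endsG L) {..<k * L} gg v = bdy D {..<k * L} f v] (mod int m)"
      using orient_change(3)[OF finite_lessThan m0 Dv fP f0] unfolding gg_def by blast
    then show ?thesis using fb v cong_trans by blast
  qed
  have path: "j < L \<Longrightarrow> [int (gg (i * L + j)) = int (gg (i * L)) - 2 * int j] (mod int m)" if i: "i < k" for i j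
  proof (induction j)
    case 0 then show ?case by simp
  next
    case (Suc j)
    have IH: "[int (gg (i * L + j)) = int (gg (i * L)) - 2 * int j] (mod int m)" using Suc by simp
    have sj: "0 < Suc j" "Suc j < L" using Suc by auto
    have vI: "i * L + Suc j + 2 \<in> IG k L" by (rule IG_mem[OF i sj])
    then have vV: "i * L + Suc j + 2 \<in> VG k L" by (simp add: VG_def)
    have bv: "\<beta> (i * L + Suc j + 2) = m - 2" by (simp add: \<beta>_def)
    have "bdy (endsG L) {..<k * L} gg (i * L + Suc j + 2) = int (gg (i * L + Suc j)) - int (gg (i * L + (Suc j - 1)))"
      unfolding bdy_def out_int[OF i sj] in_int[OF i sj] by simp
    then have st: "[int (gg (i * L + Suc j)) - int (gg (i * L + j)) = int m - 2] (mod int m)"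
      using gb[OF vV] bv m2 by (simp add: of_nat_diff)
    have d1: "int m dvd (int (gg (i * L + Suc j)) - int (gg (i * L + j)) - (int m - 2))"
      using st by (simp add: cong_iff_dvd_diff)
    have d2: "int m dvd (int (gg (i * L + j)) - (int (gg (i * L)) - 2 * int j))"
      using IH by (simp add: cong_iff_dvd_diff)
    have "int m dvd ((int (gg (i * L + Suc j)) - int (gg (i * L + j)) - (int m - 2))
         + (int (gg (i * L + j)) - (int (gg (i * L)) - 2 * int j)) + int m)"
      using d1 d2 by (intro dvd_add) simp_all
    moreover have "(int (gg (i * L + Suc j)) - int (gg (i * L + j)) - (int m - 2))
         + (int (gg (i * L + j)) - (int (gg (i * L)) - 2 * int j)) + int m
         = int (gg (i * L + Suc j)) - (int (gg (i * L)) - 2 * int (Suc j))" by simp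
    ultimately have "int m dvd (int (gg (i * L + Suc j)) - (int (gg (i * L)) - 2 * int (Suc j)))" by metis
    then show ?case unfolding cong_iff_dvd_diff .
  qed
  have odd: "odd (gg (i * L))" if i: "i < k" for i
  proof
    assume "even (gg (i * L))"
    then obtain r where r: "gg (i * L) = 2 * r" by blast
    have iL: "i * L < k * L" using edge_lt[OF i L] by simp
    have "gg (i * L) < m" using ggP iL by auto
    then have rL: "r < L" using r by (simp add: m_def)
    have e: "i * L + r < k * L" by (rule edge_lt[OF i rL])
    have "[int (gg (i * L + r)) = 0] (mod int m)" using path[OF i rL] r by simp
    then have "int m dvd int (gg (i * L + r))" by (simp add: cong_0_iff)
    then have "m dvd gg (i * L + r)" by (simp only: int_dvd_int_iff)
    moreover have "gg (i * L + r) \<noteq> 0" "gg (i * L + r) < m" using gg0 ggP e by auto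
    ultimately show False by (auto dest: dvd_imp_le)
  qed
  have "bdy (endsG L) {..<k * L} gg 0 = int (\<Sum>e\<in>{e \<in> {..<k * L}. e mod L = 0}. gg e)"
    unfolding bdy_def out0 in0 by simp
  also have "(\<Sum>e\<in>{e \<in> {..<k * L}. e mod L = 0}. gg e) = (\<Sum>i<k. gg (i * L))"
    unfolding out0_img[OF L] by (simp add: sum.reindex[OF inj_mulL[OF L]])
  finally have b0e: "bdy (endsG L) {..<k * L} gg 0 = int (\<Sum>i<k. gg (i * L))" .
  have "0 \<in> VG k L" by (simp add: VG_def)
  then have "[int (\<Sum>i<k. gg (i * L)) = int b0] (mod int m)" using gb[of 0] b0e by (simp add: \<beta>_def)
  then have "[(\<Sum>i<k. gg (i * L)) = b0] (mod m)" by (simp only: cong_int_iff)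
  then have c1: "[(\<Sum>i<k. gg (i * L)) = b0] (mod 2)" by (rule cong_dvd_modulus_nat) (simp add: m_def)
  have "[(\<Sum>i<k. gg (i * L)) = (\<Sum>i<k. 1)] (mod 2)"
    by (rule cong_sum) (use odd in \<open>auto simp: cong_def odd_iff_mod_2_eq_one\<close>)
  then have "[k = b0] (mod 2)" using c1 by (simp add: cong_def)
  then show False by (simp add: cong_def b0_def) presburger
qed

lemma params:
  fixes \<epsilon> :: real and p :: nat
  assumes e: "\<epsilon> > 0"
    and pP: "p \<ge> nat \<lceil>8 / \<epsilon>\<rceil> + 5"
  defines "k0 \<equiv> nat \<lceil>4 / \<epsilon>\<rceil> + 2"
  defines "L \<equiv> p - (p div k0 + 2)"
  shows "0 < L" "L < p" "p + k0 - 1 \<le> k0 * (p - L)" "(2 - \<epsilon>) * real p \<le> real (2 * L)"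
    "p \<le> 2 * L + 4" "0 < k0"
proof -
  have k2: "k0 \<ge> 2" by (simp add: k0_def)
  then show "0 < k0" by simp
  have d2: "p div k0 \<le> p div 2" using k2 by (simp add: div_le_mono2)
  have h2: "2 * (p div 2) \<le> p" by simp
  have p5: "p \<ge> 5" using pP by simp
  have tp: "p div k0 + 2 < p" using d2 h2 p5 by linarith
  then show "0 < L" "L < p" by (simp_all add: L_def)
  have pt: "p - L = p div k0 + 2" using tp by (simp add: L_def)
  have dm: "k0 * (p div k0) + p mod k0 = p" by (rule mult_div_mod_eq)
  have mk: "p mod k0 < k0" using k2 by simp
  have "k0 * (p - L) = k0 * (p div k0) + 2 * k0" unfolding pt by (simp add: algebra_simps)
  then show "p + k0 - 1 \<le> k0 * (p - L)" using dm mk by linarith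
  show "p \<le> 2 * L + 4" using d2 h2 tp by (simp add: L_def)
  have rk: "real k0 \<ge> 4 / \<epsilon>"
  proof -
    have "real (nat \<lceil>4 / \<epsilon>\<rceil>) \<ge> 4 / \<epsilon>" by linarith
    then show ?thesis by (simp add: k0_def)
  qed
  have k0pos: "real k0 > 0" using k2 by simp
  have ek: "\<epsilon> * real k0 \<ge> 4" using rk e by (simp add: field_simps)
  have rp: "real p \<ge> 8 / \<epsilon>"
  proof -
    have "real (nat \<lceil>8 / \<epsilon>\<rceil>) \<ge> 8 / \<epsilon>" by linarith
    then show ?thesis using pP by linarith
  qed
  have ep: "\<epsilon> * real p \<ge> 8" using rp e by (simp add: field_simps)
  have "real (p div k0) \<le> real p / real k0" by (rule of_nat_div_le_of_nat)
  also have "\<dots> \<le> \<epsilon> * real p / 4"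
  proof -
    have "4 * real p \<le> \<epsilon> * real k0 * real p" using ek by (intro mult_right_mono) simp_all
    then show ?thesis using k0pos by (simp add: field_simps)
  qed
  finally have dq: "real (p div k0) \<le> \<epsilon> * real p / 4" .
  have "real (2 * L) = 2 * real p - 2 * real (p div k0) - 4" using tp by (simp add: L_def of_nat_diff)
  then show "(2 - \<epsilon>) * real p \<le> real (2 * L)" using dq ep by (simp add: algebra_simps)
qed

theorem corollary3p3:
  fixes \<epsilon> :: real
  assumes "\<epsilon> > 0"
  shows "(\<forall>N::nat. \<exists>(V::nat set) (E::nat set) ends.
            multigraph V E ends \<and> card V + card E > N \<and>
            (\<exists>\<Gamma> \<Gamma>'. fin_abgroup \<Gamma> \<and> Factorial_Ring.prime (card (carrier \<Gamma>)) \<and> group_connected \<Gamma> V E ends \<and>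
                    fin_abgroup \<Gamma>' \<and> real (card (carrier \<Gamma>')) \<ge> (2 - \<epsilon>) * real (card (carrier \<Gamma>)) \<and>
                    \<not> group_connected \<Gamma>' V E ends))
       \<and> infinite {k::nat. Factorial_Ring.prime k \<and>
            (g k = \<infinity> \<or> (\<exists>n. g k = enat n \<and> real n > (2 - \<epsilon>) * real k))}"
proof -
  define P0 where "P0 = nat \<lceil>8 / \<epsilon>\<rceil> + 5"
  have key: "\<exists>L k. 0 < L \<and> 0 < k \<and> p \<le> 2 * L + 4 \<and> (2 - \<epsilon>) * real p \<le> real (2 * L) \<and>
      group_connected (Zm p) (VG k L) {..<k * L} (endsG L) \<and>
      \<not> group_connected (Zm (2 * L)) (VG k L) {..<k * L} (endsG L)"
    if pp: "Factorial_Ring.prime p" and pP: "p \<ge> P0" for p :: nat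
  proof -
    define k0 where "k0 = nat \<lceil>4 / \<epsilon>\<rceil> + 2"
    define L where "L = p - (p div k0 + 2)"
    note pr = params[OF assms pP[unfolded P0_def], folded k0_def, folded L_def]
    show ?thesis
    proof (intro exI conjI)
      show "group_connected (Zm p) (VG k0 L) {..<k0 * L} (endsG L)"
        by (rule conn_p[OF pp pr(1,2) pr(6,3)])
      show "\<not> group_connected (Zm (2 * L)) (VG k0 L) {..<k0 * L} (endsG L)"
        by (rule nconn[OF pr(1) pr(6)])
    qed (use pr in auto)
  qed
  have part1: "\<exists>(V::nat set) (E::nat set) ends.
            multigraph V E ends \<and> card V + card E > N \<and>
            (\<exists>\<Gamma> \<Gamma>'. fin_abgroup \<Gamma> \<and> Factorial_Ring.prime (card (carrier \<Gamma>)) \<and> group_connected \<Gamma> V E ends \<and>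
                    fin_abgroup \<Gamma>' \<and> real (card (carrier \<Gamma>')) \<ge> (2 - \<epsilon>) * real (card (carrier \<Gamma>)) \<and>
                    \<not> group_connected \<Gamma>' V E ends)" for N
  proof -
    obtain p :: nat where pp: "Factorial_Ring.prime p" and pg: "p > P0 + 2 * N + 10"
      using bigger_prime by blast
    have pP: "p \<ge> P0" using pg by simp
    from key[OF pp pP] obtain L k where Lk: "0 < L" "0 < k" "p \<le> 2 * L + 4" "(2 - \<epsilon>) * real p \<le> real (2 * L)"
      "group_connected (Zm p) (VG k L) {..<k * L} (endsG L)"
      "\<not> group_connected (Zm (2 * L)) (VG k L) {..<k * L} (endsG L)"
      by blast
    have "L \<le> k * L" using Lk(2) by simp
    moreover have "N < L" using Lk(3) pg by linarith
    ultimately have "N < k * L" by linarith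
    then have sz: "N < card (VG k L) + card {..<k * L}" by simp
    have p0: "p > 0" using pp prime_gt_0_nat by blast
    have L0: "2 * L > 0" using Lk(1) by simp
    have G: "\<exists>\<Gamma> \<Gamma>'. fin_abgroup \<Gamma> \<and> Factorial_Ring.prime (card (carrier \<Gamma>)) \<and> group_connected \<Gamma> (VG k L) {..<k * L} (endsG L) \<and>
                    fin_abgroup \<Gamma>' \<and> real (card (carrier \<Gamma>')) \<ge> (2 - \<epsilon>) * real (card (carrier \<Gamma>)) \<and>
                    \<not> group_connected \<Gamma>' (VG k L) {..<k * L} (endsG L)"
    proof (rule exI[of _ "Zm p"], rule exI[of _ "Zm (2 * L)"], intro conjI)
      show "fin_abgroup (Zm p)" by (rule Zm_fin[OF p0])
      show "fin_abgroup (Zm (2 * L))" by (rule Zm_fin[OF L0])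
      show "Factorial_Ring.prime (card (carrier (Zm p)))" using pp by simp
      show "(2 - \<epsilon>) * real (card (carrier (Zm p))) \<le> real (card (carrier (Zm (2 * L))))"
        using Lk(4) by simp
    qed (rule Lk(5), rule Lk(6))
    show ?thesis
      by (rule exI[of _ "VG k L"], rule exI[of _ "{..<k * L}"], rule exI[of _ "endsG L"],
          intro conjI multigraph_G[OF Lk(1)] sz G)
  qed
  have inS: "g p = \<infinity> \<or> (\<exists>n. g p = enat n \<and> real n > (2 - \<epsilon>) * real p)"
    if pp: "Factorial_Ring.prime p" and pP: "p \<ge> P0" for p :: nat
  proof (cases "\<exists>m. g_prop p m")
    case False then show ?thesis by (simp add: g_def)
  next
    case True
    define n where "n = (LEAST m. g_prop p m)"
    have gp: "g_prop p n" unfolding n_def using True by (rule LeastI_ex)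
    have gn: "g p = enat n" using True by (simp add: g_def n_def)
    obtain L k where Lk: "0 < L" "0 < k" "(2 - \<epsilon>) * real p \<le> real (2 * L)"
      "group_connected (Zm p) (VG k L) {..<k * L} (endsG L)"
      "\<not> group_connected (Zm (2 * L)) (VG k L) {..<k * L} (endsG L)"
      using key[OF pp pP] by blast
    have p0: "p > 0" using pp prime_gt_0_nat by blast
    have "real n > (2 - \<epsilon>) * real p"
    proof (rule ccontr)
      assume "\<not> ?thesis"
      then have "n \<le> 2 * L" using Lk(3) by linarith
      moreover have "\<exists>\<Gamma>. fin_abgroup \<Gamma> \<and> card (carrier \<Gamma>) = p \<and> group_connected \<Gamma> (VG k L) {..<k * L} (endsG L)"
        using Zm_fin[OF p0] Lk(4) by (intro exI[of _ "Zm p"]) simp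
      moreover note gp1 = gp[unfolded g_prop_def, rule_format, OF multigraph_G[OF Lk(1), of k]]
      moreover have "fin_abgroup (Zm (2 * L))" using Zm_fin[of "2 * L"] Lk(1) by simp
      ultimately have "group_connected (Zm (2 * L)) (VG k L) {..<k * L} (endsG L)"
        by simp
      then show False using Lk(5) by simp
    qed
    then show ?thesis using gn by blast
  qed
  have "infinite {k::nat. Factorial_Ring.prime k \<and>
            (g k = \<infinity> \<or> (\<exists>n. g k = enat n \<and> real n > (2 - \<epsilon>) * real k))}"
    unfolding infinite_nat_iff_unbounded_le
  proof
    fix m
    obtain p :: nat where pp: "Factorial_Ring.prime p" and pg: "p > m + P0"
      using bigger_prime by blast
    then show "\<exists>n\<ge>m. n \<in> {k::nat. Factorial_Ring.prime k \<and>
            (g k = \<infinity> \<or> (\<exists>n. g k = enat n \<and> real n > (2 - \<epsilon>) * real k))}"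
      using inS[OF pp] by (intro exI[of _ p]) auto
  qed
  then show ?thesis using part1 by blast
qed

end
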